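(* For every integer $m \geq 1$, the clique number of the graph $\mathrm{Cay}(\sigma_m)$ is at most $\rho(2^m)$, where $\rho$ is the Hurwitz-Radon function. Moreover, $\rho(2^m) < 2^m$ for $m \geq 4$.
   Context: Identify $\mathbb{Z}_2^{2m}$ with the integers $0,\dots,4^m-1$ via binary representation, so each $i \in \mathbb{Z}_2^{2m}$ has a base-4 representation with $m$ digits (each base-4 digit being a consecutive pair of bits). Define $\sigma_m:\mathbb{Z}_2^{2m}\to\mathbb{Z}_2$ by $\sigma_m(i)=1$ if and only if the number of base-4 digits of $i$ equal to $1$ is odd. The Cayley graph $\mathrm{Cay}(\sigma_m)$ is the simple undirected graph with vertex set $\mathbb{Z}_2^{2m}$ in which distinct $i,j$ are adjacent if and only if $\sigma_m(i+j)=1$. The Hurwitz-Radon function is defined by $\rho(2^{4d+c}) = 2^c + 8d$ for integers $d \geq 0$ and $0 \leq c < 4$. *)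

theory Defs
  imports Main
begin

text \<open>Elements of Z_2^{2m} are identified with naturals 0..4^m-1; group addition is bitwise xor.\<close>

definition base4_digit :: "nat \<Rightarrow> nat \<Rightarrow> nat" where
  "base4_digit i k = (i div 4 ^ k) mod 4"

definition sigma :: "nat \<Rightarrow> nat \<Rightarrow> bool" where
  "sigma m i \<longleftrightarrow> odd (card {k. k < m \<and> base4_digit i k = 1})"

definition cay_adj :: "nat \<Rightarrow> nat \<Rightarrow> nat \<Rightarrow> bool" where
  "cay_adj m i j \<longleftrightarrow> i \<noteq> j \<and> sigma m (xor i j)"

definition is_clique :: "nat \<Rightarrow> nat set \<Rightarrow> bool" where
  "is_clique m S \<longleftrightarrow> S \<subseteq> {..<4 ^ m} \<and> (\<forall>i\<in>S. \<forall>j\<in>S. i \<noteq> j \<longrightarrow> cay_adj m i j)"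

definition clique_number :: "nat \<Rightarrow> nat" where
  "clique_number m = Max {card S | S. is_clique m S}"

definition hurwitz_radon :: "nat \<Rightarrow> nat" where
  "hurwitz_radon n = (let k = (THE k. n = 2 ^ k) in 2 ^ (k mod 4) + 8 * (k div 4))"

end

theory Submission
  imports Defs
begin


lemma digit_bits: "base4_digit i k = take_bit 2 (drop_bit (2*k) i)"
  by (simp add: base4_digit_def take_bit_eq_mod drop_bit_eq_div power_mult)

lemma digit_xor: "base4_digit (xor a b) k = xor (base4_digit a k) (base4_digit b k)"
  by (simp add: digit_bits drop_bit_xor take_bit_xor)

lemma digit_lt: "base4_digit a k < 4"
  by (simp add: base4_digit_def)

lemma xor_lt: "(a::nat) < 4^m \<Longrightarrow> b < 4^m \<Longrightarrow> xor a b < 4^m"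
proof -
  assume "a < 4^m" "b < 4^m"
  hence "a < 2^(2*m)" "b < 2^(2*m)" by (simp_all add: power_mult)
  hence "take_bit (2*m) (xor a b) = xor a b" by (simp add: take_bit_xor take_bit_nat_eq_self)
  hence "xor a b < 2^(2*m)" by (metis take_bit_nat_eq_self_iff)
  thus ?thesis by (simp add: power_mult)
qed

definition g :: "nat \<Rightarrow> nat" where "g x = (if x = 1 then 1 else 0)"

definition Qn :: "nat \<Rightarrow> nat \<Rightarrow> nat" where "Qn m i = (\<Sum>k<m. g (base4_digit i k))"

lemma sigma_Qn: "sigma m i \<longleftrightarrow> odd (Qn m i)"
proof -
  have "card {k. k < m \<and> base4_digit i k = 1} = (\<Sum>k<m. g (base4_digit i k))"
    unfolding g_def
    by (simp add: sum.If_cases lessThan_def Collect_conj_eq Int_commute)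
  thus ?thesis by (simp add: sigma_def Qn_def)
qed

lemma g_cubic: "x < 4 \<Longrightarrow> y < 4 \<Longrightarrow> z < 4 \<Longrightarrow>
  even (g (xor (xor x y) z) + g (xor x y) + g (xor x z) + g (xor y z) + g x + g y + g z)"
proof -
  assume "x < 4" "y < 4" "z < 4"
  hence "x \<in> {0,1,2,3}" "y \<in> {0,1,2,3}" "z \<in> {0,1,2,3}" by auto
  thus ?thesis by (elim insertE emptyE) (simp_all add: g_def)
qed

lemma Qn_cubic: "even (Qn m (xor (xor a b) c) + Qn m (xor a b) + Qn m (xor a c) + Qn m (xor b c)
   + Qn m a + Qn m b + Qn m c)"
proof -
  have "Qn m (xor (xor a b) c) + Qn m (xor a b) + Qn m (xor a c) + Qn m (xor b c)
   + Qn m a + Qn m b + Qn m c = (\<Sum>k<m. g (xor (xor (base4_digit a k) (base4_digit b k)) (base4_digit c k))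
     + g (xor (base4_digit a k) (base4_digit b k)) + g (xor (base4_digit a k) (base4_digit c k))
     + g (xor (base4_digit b k) (base4_digit c k)) + g (base4_digit a k) + g (base4_digit b k) + g (base4_digit c k))"
    by (simp add: Qn_def digit_xor sum.distrib)
  also have "even \<dots>" by (rule dvd_sum) (intro g_cubic digit_lt)
  finally show ?thesis .
qed

lemma Qn_zero: "Qn m 0 = 0"
  by (simp add: Qn_def g_def base4_digit_def)

lemma sigma_zero: "\<not> sigma m 0" by (simp add: sigma_Qn Qn_zero)

definition B :: "nat \<Rightarrow> nat \<Rightarrow> nat \<Rightarrow> bool" where
  "B m a b \<longleftrightarrow> (sigma m (xor a b) \<noteq> sigma m a) \<noteq> sigma m b"

lemma B_comm: "B m a b = B m b a" by (auto simp: B_def xor.commute)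

lemma B_add: "B m (xor a b) c \<longleftrightarrow> B m a c \<noteq> B m b c"
  using Qn_cubic[of m a b c] unfolding B_def sigma_Qn xor.assoc by simp argo

lemma B_zero: "\<not> B m 0 c" by (simp add: B_def sigma_zero)

lemma sigma_xor: "sigma m (xor a b) \<longleftrightarrow> (B m a b \<noteq> sigma m a) \<noteq> sigma m b"
  by (auto simp: B_def)



primrec Wv :: "(nat \<Rightarrow> nat) \<Rightarrow> nat set \<Rightarrow> nat \<Rightarrow> nat" where
  "Wv v T 0 = 0"
| "Wv v T (Suc k) = (if k \<in> T then xor (v k) (Wv v T k) else Wv v T k)"

definition good :: "nat \<Rightarrow> (nat \<Rightarrow> nat) \<Rightarrow> nat \<Rightarrow> bool" where
  "good m v n \<longleftrightarrow> (\<forall>i<n. v i < 4^m \<and> sigma m (v i)) \<and>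
     (\<forall>i<n. \<forall>j<n. i \<noteq> j \<longrightarrow> sigma m (xor (v i) (v j)))"

lemma good_mono: "good m v n \<Longrightarrow> n' \<le> n \<Longrightarrow> good m v n'"
  by (auto simp: good_def)

lemma Bv: "good m v n \<Longrightarrow> i<n \<Longrightarrow> j<n \<Longrightarrow> B m (v i) (v j) \<longleftrightarrow> i \<noteq> j"
  by (auto simp: good_def B_def sigma_zero)

lemma W_lt: "good m v n \<Longrightarrow> k \<le> n \<Longrightarrow> Wv v T k < 4^m"
  by (induction k) (auto simp: good_def xor_lt)

lemma W_B: "good m v n \<Longrightarrow> j<n \<Longrightarrow> k \<le> n \<Longrightarrow>
   B m (Wv v T k) (v j) \<longleftrightarrow> odd (card (T \<inter> {..<k} - {j}))"
proof (induction k)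
  case 0 then show ?case by (simp add: B_zero)
next
  case (Suc k)
  have IH: "B m (Wv v T k) (v j) \<longleftrightarrow> odd (card (T \<inter> {..<k} - {j}))" using Suc by simp
  show ?case
  proof (cases "k \<in> T")
    case True
    have e: "B m (v k) (v j) \<longleftrightarrow> k \<noteq> j" using Bv[OF Suc.prems(1)] Suc.prems by simp
    show ?thesis
    proof (cases "k = j")
      case True
      have "T \<inter> {..<Suc k} - {j} = T \<inter> {..<k} - {j}" using True by auto
      then show ?thesis using \<open>k \<in> T\<close> IH e B_add True by simp
    next
      case False
      have "T \<inter> {..<Suc k} - {j} = insert k (T \<inter> {..<k} - {j})" using False \<open>k \<in> T\<close> by auto
      moreover have "card (insert k (T \<inter> {..<k} - {j})) = Suc (card (T \<inter> {..<k} - {j}))"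
        by (rule card_insert_disjoint) auto
      ultimately show ?thesis using \<open>k \<in> T\<close> IH e B_add False by simp
    qed
  next
    case False
    have "T \<inter> {..<Suc k} = T \<inter> {..<k}" using False by (auto simp: less_Suc_eq)
    then show ?thesis using False IH by simp
  qed
qed

definition tri :: "nat \<Rightarrow> nat" where "tri t = t * (t+1) div 2"

lemma tri_Suc: "tri (Suc t) = tri t + t + 1"
proof -
  have "Suc t * (Suc t + 1) = t * (t+1) + 2 * (t+1)" by (simp add: algebra_simps)
  moreover have "even (t*(t+1))" by simp
  ultimately show ?thesis unfolding tri_def by (auto elim!: evenE)
qed

lemma W_Q: "good m v n \<Longrightarrow> k \<le> n \<Longrightarrow>
   sigma m (Wv v T k) \<longleftrightarrow> odd (tri (card (T \<inter> {..<k})))"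
proof (induction k)
  case 0 then show ?case by (simp add: sigma_zero tri_def)
next
  case (Suc k)
  have IH: "sigma m (Wv v T k) \<longleftrightarrow> odd (tri (card (T \<inter> {..<k})))" using Suc by simp
  show ?case
  proof (cases "k \<in> T")
    case True
    have bb: "B m (v k) (Wv v T k) \<longleftrightarrow> odd (card (T \<inter> {..<k}))"
      using W_B[OF Suc.prems(1), of k k T] Suc.prems B_comm
      by (simp add: Diff_triv)
    have sk: "sigma m (v k)" using Suc.prems by (simp add: good_def)
    have "T \<inter> {..<Suc k} = insert k (T \<inter> {..<k})" using True by (auto simp: less_Suc_eq)
    moreover have "card (insert k (T \<inter> {..<k})) = Suc (card (T \<inter> {..<k}))"
      by (rule card_insert_disjoint) auto
    ultimately show ?thesis using True IH bb sk sigma_xor[of m "v k" "Wv v T k"] tri_Suc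
      apply simp by blast
  next
    case False
    have "T \<inter> {..<Suc k} = T \<inter> {..<k}" using False by (auto simp: less_Suc_eq)
    then show ?thesis using False IH by simp
  qed
qed

lemma xor_cancel_left: "xor a (xor a b) = (b::nat)"
  by (simp flip: xor.assoc)

lemma W_xor: "xor (Wv v T k) (Wv v U k) = Wv v ((T - U) \<union> (U - T)) k"
proof (induction k)
  case 0 then show ?case by simp
next
  case (Suc k)
  then show ?case
    by (cases "k \<in> T"; cases "k \<in> U") (simp_all add: xor.assoc xor.left_commute xor_cancel_left)
qed



lemma W_inj:
  assumes gd: "good m v n" and ev: "even n"
  shows "inj_on (\<lambda>T. Wv v T n) (Pow {..<n})"
proof (rule inj_onI)
  fix T U assume T: "T \<in> Pow {..<n}" and U: "U \<in> Pow {..<n}" and eq: "Wv v T n = Wv v U n"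
  define D where "D = (T - U) \<union> (U - T)"
  have D0: "Wv v D n = 0" using W_xor[of v T n U] eq by (simp add: D_def)
  have Dsub: "D \<subseteq> {..<n}" using T U by (auto simp: D_def)
  have nb: "\<And>j. j < n \<Longrightarrow> \<not> odd (card (D - {j}))"
  proof -
    fix j assume "j < n"
    have "D \<inter> {..<n} = D" using Dsub by auto
    thus "\<not> odd (card (D - {j}))"
      using W_B[OF gd \<open>j<n\<close> order.refl, of D] D0 B_zero by simp
  qed
  have fD: "finite D" using Dsub finite_subset by blast
  have "D = {}"
  proof (rule ccontr)
    assume "D \<noteq> {}"
    show False
    proof (cases "even (card D)")
      case True
      obtain j where "j \<in> D" using \<open>D \<noteq> {}\<close> by blast
      hence "card (D - {j}) = card D - 1" "card D > 0" using fD by (auto simp: card_gt_0_iff)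
      moreover have "j < n" using \<open>j \<in> D\<close> Dsub by auto
      ultimately show False using nb[of j] True by auto
    next
      case False
      have "D \<noteq> {..<n}" using False ev by auto
      then obtain j where "j < n" "j \<notin> D" using Dsub by auto
      thus False using nb[of j] False by simp
    qed
  qed
  thus "T = U" unfolding D_def by auto
qed

lemma even_le: assumes "good m v n" "even n" shows "n \<le> 2*m"
proof -
  have "card (Pow {..<n}) \<le> card {..<(4::nat)^m}"
    by (rule card_inj_on_le[OF W_inj[OF assms]]) (use W_lt[OF assms(1)] in auto)
  hence "(2::nat)^n \<le> 2^(2*m)" by (simp add: card_Pow power_mult)
  thus ?thesis by simp
qed

lemma n_le: assumes "good m v n" shows "n \<le> 2*m+1"
proof (rule ccontr)
  assume "\<not> n \<le> 2*m+1"
  hence "good m v (2*m+2)" using good_mono[OF assms] by simp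
  from even_le[OF this] show False by simp
qed

lemma W_bij: assumes "good m v (2*m)"
  shows "bij_betw (\<lambda>T. Wv v T (2*m)) (Pow {..<2*m}) {..<4^m}"
proof -
  have inj: "inj_on (\<lambda>T. Wv v T (2*m)) (Pow {..<2*m})" by (rule W_inj[OF assms]) simp
  have sub: "(\<lambda>T. Wv v T (2*m)) ` Pow {..<2*m} \<subseteq> {..<4^m}" using W_lt[OF assms] by auto
  have "card ((\<lambda>T. Wv v T (2*m)) ` Pow {..<2*m}) = card {..<(4::nat)^m}"
    using card_image[OF inj] by (simp add: card_Pow power_mult)
  hence "(\<lambda>T. Wv v T (2*m)) ` Pow {..<2*m} = {..<4^m}"
    using sub by (intro card_subset_eq) auto
  thus ?thesis using inj by (simp add: bij_betw_def)
qed

lemma digit_Suc: "base4_digit i (Suc k) = base4_digit (i div 4) k"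
  by (simp add: base4_digit_def div_mult2_eq)

lemma Qn_Suc: "Qn (Suc m) i = g (i mod 4) + Qn m (i div 4)"
  unfolding Qn_def by (simp only: sum.lessThan_Suc_shift digit_Suc) (simp add: base4_digit_def)

lemma sum4: "(\<Sum>i<4*(N::nat). f (i mod 4) * h (i div 4)) = (\<Sum>d<4. f d) * (\<Sum>j<N. (h j :: int))"
proof (induction N)
  case 0 then show ?case by simp
next
  case (Suc N)
  have a: "Suc (4*N) div 4 = N" "Suc (4*N) mod 4 = 1" "Suc (Suc (4*N)) div 4 = N" "Suc (Suc (4*N)) mod 4 = 2"
      "Suc (Suc (Suc (4*N))) div 4 = N" "Suc (Suc (Suc (4*N))) mod 4 = 3" "4*N div 4 = N" "4*N mod 4 = 0" by presburger+
  have e: "4 * Suc N = Suc (Suc (Suc (Suc (4*N))))" by simp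
  have "(\<Sum>i<4*Suc N. f (i mod 4) * h (i div 4)) = (\<Sum>i<4*N. f (i mod 4) * h (i div 4))
     + f 0 * h N + f 1 * h N + f 2 * h N + f 3 * h N"
    unfolding e sum.lessThan_Suc a by simp
  also have "\<dots> = (\<Sum>d<4. f d) * (\<Sum>j<Suc N. h j)"
  proof -
    have f4: "(\<Sum>d<4. f d) = f 0 + f 1 + f 2 + f 3" by (simp add: eval_nat_numeral)
    show ?thesis using Suc unfolding f4 by (simp add: ring_distribs)
  qed
  finally show ?case .
qed

lemma char_digits: "(\<Sum>i<4^m. (-1::int) ^ Qn m i) = 2^m"
proof (induction m)
  case 0 then show ?case by (simp add: Qn_def)
next
  case (Suc m)
  have "(\<Sum>i<4^Suc m. (-1::int) ^ Qn (Suc m) i) = (\<Sum>i<4*4^m. (-1::int) ^ g (i mod 4) * (-1) ^ Qn m (i div 4))"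
    by (simp add: Qn_Suc power_add)
  also have "\<dots> = (\<Sum>d<4. (-1::int) ^ g d) * (\<Sum>j<4^m. (-1) ^ Qn m j)" by (rule sum4)
  also have "(\<Sum>d<4. (-1::int) ^ g d) = 2" by (simp add: eval_nat_numeral g_def)
  finally show ?case using Suc by simp
qed

definition s :: "nat \<Rightarrow> int" where "s t = (-1) ^ tri t"
definition G :: "nat \<Rightarrow> nat \<Rightarrow> int" where "G r n = (\<Sum>T\<in>Pow {..<n}. s (card T + r))"

lemma s_2: "s (t + 2) = - s t"
  by (simp add: s_def numeral_eq_Suc tri_Suc power_add)

lemma G_Suc: "G r (Suc n) = G r n + G (Suc r) n"
proof -
  have d: "Pow {..<n} \<inter> insert n ` Pow {..<n} = {}" by auto
  have inj: "inj_on (insert n) (Pow {..<n})"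
    by (rule inj_onI) (metis PowD Diff_insert_absorb lessThan_iff order_less_irrefl subset_iff)
  have "G r (Suc n) = (\<Sum>T\<in>Pow {..<n} \<union> insert n ` Pow {..<n}. s (card T + r))"
    by (simp add: G_def lessThan_Suc Pow_insert)
  also have "\<dots> = G r n + (\<Sum>T\<in>insert n ` Pow {..<n}. s (card T + r))"
    by (subst sum.union_disjoint) (use d in \<open>auto simp: G_def\<close>)
  also have "(\<Sum>T\<in>insert n ` Pow {..<n}. s (card T + r)) = (\<Sum>T\<in>Pow {..<n}. s (card (insert n T) + r))"
    by (subst sum.reindex[OF inj]) simp
  also have "\<dots> = G (Suc r) n"
    unfolding G_def
  proof (rule sum.cong[OF refl])
    fix T assume "T \<in> Pow {..<n}"
    hence "card (insert n T) = Suc (card T)" using finite_subset by (auto intro!: card_insert_disjoint)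
    thus "s (card (insert n T) + r) = s (card T + Suc r)" by simp
  qed
  finally show ?thesis .
qed

lemma G_2r: "G (r+2) n = - G r n"
  unfolding G_def sum_negf[symmetric] by (rule sum.cong[OF refl]) (metis add.assoc s_2)

lemma G_2n: "G r (n+2) = 2 * G (Suc r) n"
proof -
  have "G r (n+2) = G r n + G (Suc r) n + (G (Suc r) n + G (Suc (Suc r)) n)"
    by (simp add: numeral_eq_Suc G_Suc)
  also have "G (Suc (Suc r)) n = - G r n" using G_2r[of r n] by simp
  finally show ?thesis by simp
qed

definition c0 :: "nat \<Rightarrow> int" where "c0 m = (if m mod 4 = 0 \<or> m mod 4 = 3 then 1 else -1)"

lemma G_closed: "G 0 (2*m) = 2^m * c0 m \<and> G 1 (2*m) = 2^m * c0 (Suc m)"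
proof (induction m)
  case 0 then show ?case by (simp add: G_def c0_def s_def tri_def)
next
  case (Suc m)
  have e: "2 * Suc m = 2*m + 2" by simp
  have "G 0 (2 * Suc m) = 2 * G 1 (2*m)" using G_2n[of 0 "2*m"] e by simp
  moreover have "G 1 (2 * Suc m) = - 2 * G 0 (2*m)" using G_2n[of 1 "2*m"] G_2r[of 0 "2*m"] e by simp
  moreover have "c0 (Suc (Suc m)) = - c0 m" unfolding c0_def by presburger
  ultimately show ?case using Suc by simp
qed

lemma two_m_case: assumes "good m v (2*m)" shows "m mod 4 = 0 \<or> m mod 4 = 3"
proof -
  have bij: "bij_betw (\<lambda>T. Wv v T (2*m)) (Pow {..<2*m}) {..<4^m}" by (rule W_bij[OF assms])
  have "(2::int)^m = (\<Sum>i<4^m. (-1::int) ^ Qn m i)" by (simp add: char_digits)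
  also have "\<dots> = (\<Sum>T\<in>Pow {..<2*m}. (-1::int) ^ Qn m (Wv v T (2*m)))"
    by (rule sum.reindex_bij_betw[OF bij, symmetric])
  also have "\<dots> = G 0 (2*m)" unfolding G_def
  proof (rule sum.cong[OF refl])
    fix T assume T: "T \<in> Pow {..<2*m}"
    hence "T \<inter> {..<2*m} = T" by auto
    hence "sigma m (Wv v T (2*m)) \<longleftrightarrow> odd (tri (card T))" using W_Q[OF assms order.refl, of T] by simp
    thus "(-1::int) ^ Qn m (Wv v T (2*m)) = s (card T + 0)"
      by (simp add: s_def minus_one_power_iff sigma_Qn)
  qed
  finally have "(2::int)^m = 2^m * c0 m" using G_closed by simp
  hence "c0 m = 1" by simp
  thus ?thesis unfolding c0_def by (auto split: if_splits)
qed



lemma odd_case: assumes gd: "good m v (2*m+1)" and m1: "m \<ge> 1" shows "odd m"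
proof -
  have g2: "good m v (2*m)" using good_mono[OF gd] by simp
  have bij: "bij_betw (\<lambda>T. Wv v T (2*m)) (Pow {..<2*m}) {..<4^m}" by (rule W_bij[OF g2])
  have "v (2*m) < 4^m" using gd by (simp add: good_def)
  then obtain T where T: "T \<in> Pow {..<2*m}" and WT: "Wv v T (2*m) = v (2*m)"
    using bij unfolding bij_betw_def by (metis imageE lessThan_iff)
  have TT: "T \<inter> {..<2*m} = T" using T by auto
  have oj: "\<And>j. j < 2*m \<Longrightarrow> odd (card (T - {j}))"
  proof -
    fix j assume j: "j < 2*m"
    have "B m (v (2*m)) (v j)" using Bv[OF gd, of "2*m" j] j by simp
    thus "odd (card (T - {j}))" using W_B[OF gd, of j "2*m" T] j WT TT by simp
  qed
  have fT: "finite T" using T finite_subset by blast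
  have Tall: "T = {..<2*m}"
  proof (rule ccontr)
    assume "T \<noteq> {..<2*m}"
    then obtain j where j: "j < 2*m" "j \<notin> T" using T by auto
    hence oT: "odd (card T)" using oj[of j] by simp
    hence "T \<noteq> {}" by auto
    then obtain i where "i \<in> T" by blast
    hence "i < 2*m" "card (T - {i}) = card T - 1" "card T > 0" using T fT by (auto simp: card_gt_0_iff)
    thus False using oj[of i] oT by auto
  qed
  have "sigma m (v (2*m))" using gd by (simp add: good_def)
  hence "odd (tri (2*m))" using W_Q[OF gd, of "2*m" T] WT TT Tall by simp
  moreover have "tri (2*m) = m * (2*m+1)" unfolding tri_def by simp
  ultimately show ?thesis by simp
qed

definition hr :: "nat \<Rightarrow> nat" where "hr m = 2^(m mod 4) + 8*(m div 4)"

lemma good_bound: assumes gd: "good m v n" and m1: "m \<ge> 1" shows "n + 1 \<le> hr m"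
proof -
  have n1: "n \<le> 2*m+1" by (rule n_le[OF gd])
  have c3: "n = 2*m+1 \<Longrightarrow> m mod 4 = 3"
  proof -
    assume "n = 2*m+1"
    hence "odd m" "m mod 4 = 0 \<or> m mod 4 = 3"
      using odd_case[OF _ m1] two_m_case[OF good_mono[OF gd]] gd by auto
    thus ?thesis by presburger
  qed
  have c03: "n \<ge> 2*m \<Longrightarrow> m mod 4 = 0 \<or> m mod 4 = 3"
    using two_m_case[OF good_mono[OF gd]] by auto
  obtain d c where m: "m = 4*d + c" "c < 4" by (metis div_mod_decomp mod_less_divisor zero_less_numeral mult.commute)
  hence mc: "m mod 4 = c" "m div 4 = d" by auto
  have "c = 0 \<or> c = 1 \<or> c = 2 \<or> c = 3" using m by auto
  thus ?thesis
  proof (elim disjE)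
    assume "c = 0" thus ?thesis using n1 c3 mc m unfolding hr_def by (cases "n = 2*m+1") auto
  next
    assume "c = 1" thus ?thesis using n1 c3 c03 mc m unfolding hr_def by (cases "n \<ge> 2*m") auto
  next
    assume "c = 2" thus ?thesis using n1 c3 c03 mc m unfolding hr_def by (cases "n \<ge> 2*m") auto
  next
    assume "c = 3" thus ?thesis using n1 mc m unfolding hr_def by auto
  qed
qed

lemma clique_bound: assumes cl: "is_clique m S" and m1: "m \<ge> 1" shows "card S \<le> hr m"
proof (cases "S = {}")
  case True thus ?thesis by simp
next
  case False
  then obtain s0 where s0: "s0 \<in> S" by blast
  have Ssub: "S \<subseteq> {..<4^m}" using cl by (simp add: is_clique_def)
  have fS: "finite S" using Ssub finite_subset by blast
  define S' where "S' = (\<lambda>x. xor x s0) ` (S - {s0})"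
  have inj: "inj_on (\<lambda>x. xor x s0) (S - {s0})"
    by (rule inj_onI) (metis xor.assoc xor_self_eq xor.right_neutral)
  have cS': "card S' = card S - 1" unfolding S'_def using card_image[OF inj] s0 fS by simp
  have fS': "finite S'" unfolding S'_def using fS by simp
  obtain h where h: "bij_betw h {0..<card S'} S'" using ex_bij_betw_nat_finite[OF fS'] by blast
  have mem: "\<And>i. i < card S' \<Longrightarrow> \<exists>x. x \<in> S \<and> x \<noteq> s0 \<and> h i = xor x s0"
    using h unfolding bij_betw_def S'_def by auto
  have gd: "good m h (card S')"
    unfolding good_def
  proof (intro conjI allI impI)
    fix i assume i: "i < card S'"
    then obtain x where x: "x \<in> S" "x \<noteq> s0" "h i = xor x s0" using mem by blast
    show "h i < 4^m" using x s0 Ssub by (auto intro!: xor_lt)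
    show "sigma m (h i)" using x s0 cl by (auto simp: is_clique_def cay_adj_def)
  next
    fix i j assume i: "i < card S'" and j: "j < card S'" and ij: "i \<noteq> j"
    obtain x where x: "x \<in> S" "x \<noteq> s0" "h i = xor x s0" using mem i by blast
    obtain y where y: "y \<in> S" "y \<noteq> s0" "h j = xor y s0" using mem j by blast
    have "h i \<noteq> h j" using h i j ij unfolding bij_betw_def inj_on_def by auto
    hence "x \<noteq> y" using x y by auto
    moreover have "xor (h i) (h j) = xor x y" using x y
      by (simp add: xor.assoc xor.left_commute xor_cancel_left xor.commute)
    ultimately show "sigma m (xor (h i) (h j))" using x y cl by (auto simp: is_clique_def cay_adj_def)
  qed
  have "card S' + 1 \<le> hr m" by (rule good_bound[OF gd m1])
  thus ?thesis using cS' s0 fS by (cases "card S") auto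
qed

lemma hr_eq: "hurwitz_radon (2^m) = hr m"
proof -
  have "(THE k. (2::nat)^m = 2^k) = m" by (rule the_equality) (auto dest: power_inject_exp[THEN iffD1, rotated])
  thus ?thesis by (simp add: hurwitz_radon_def hr_def)
qed

lemma sixteen: "d \<ge> 1 \<Longrightarrow> 8*d + 1 < (16::nat)^d"
proof (induction d)
  case 0 thus ?case by simp
next
  case (Suc d) thus ?case by (cases "d = 0") auto
qed

lemma hr_lt: assumes "m \<ge> 4" shows "hr m < 2^m"
proof -
  define d c where "d = m div 4" and "c = m mod 4"
  have m: "m = 4*d + c" "d \<ge> 1" using assms by (auto simp: d_def c_def)
  have "(16::nat)^d = 2^(4*d)" by (subst power_mult) simp
  hence "(2::nat)^m = 2^c * 16^d" by (simp add: m power_add)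
  moreover have "hr m = 2^c + 8*d" by (simp add: hr_def d_def c_def)
  moreover have "2^c + 8*d \<le> (2::nat)^c * (8*d+1)" by (simp add: algebra_simps)
  moreover have "(2::nat)^c * (8*d+1) < 2^c * 16^d" using sixteen[OF m(2)]
    by (intro mult_strict_left_mono) auto
  ultimately show ?thesis by linarith
qed

theorem lemma3:
  fixes m :: nat
  assumes "m \<ge> 1"
  shows "clique_number m \<le> hurwitz_radon (2 ^ m) \<and> (m \<ge> 4 \<longrightarrow> hurwitz_radon (2 ^ m) < 2 ^ m)"
proof
  have fin: "finite {card S |S. is_clique m S}"
  proof (rule finite_subset)
    show "{card S |S. is_clique m S} \<subseteq> {..card {..<(4::nat)^m}}"
      by (auto simp: is_clique_def) (metis card_lessThan card_mono finite_lessThan)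
  qed simp
  have ne: "{card S |S. is_clique m S} \<noteq> {}"
    using is_clique_def[of m "{}"] by auto
  show "clique_number m \<le> hurwitz_radon (2 ^ m)"
    unfolding clique_number_def hr_eq
    using fin ne clique_bound[OF _ assms] by (auto intro!: Max.boundedI)
  show "m \<ge> 4 \<longrightarrow> hurwitz_radon (2 ^ m) < 2 ^ m" using hr_lt hr_eq by simp
qed

end
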